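(* Let $\mathcal{A}\in\mathcal{T}'_5$ with $c_{13}^4=c_{14}^5=c_{24}^5=0$. Then the automorphisms of $\mathcal{A}$ are exactly the linear maps $\varphi$ given by $\varphi(e_1)=xe_1+a_{41}e_4+a_{51}e_5$, $\varphi(e_2)=a_{12}e_1+ye_2+a_{42}e_4+a_{52}e_5$, $\varphi(e_3)=xye_3$, $\varphi(e_4)=xy^2e_4+a_{54}e_5$, $\varphi(e_5)=x^2y^3e_5$, where $x,y\in\mathbb{C}^*$, $a_{12},a_{42},a_{51},a_{52}\in\mathbb{C}$ are arbitrary, $a_{41}=c_{13}^5x(1-y^2)$ and $a_{54}=xy(a_{12}c_{13}^5-a_{42})$.
   Context: Over $\mathbb{C}$, basis $e_1,\dots,e_n$, $e_ie_j=\sum_kc_{ij}^ke_k$. For $n\ge3$, $\mathcal{T}'_n$ is the family of anticommutative algebra structures with $c_{ij}^k=0$ whenever $k\le\max\{i,j\}$ and $e_ie_{i+1}=e_{i+2}$ for $1\le i\le n-2$, other structure constants arbitrary subject to these and anticommutativity. *)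

theory Defs
  imports Main "HOL-Library.Complex_Order" Complex_Main
begin

text \<open>Vectors of the n-dimensional algebra: coordinate functions w.r.t. the basis
e_1,...,e_n, i.e. functions nat => complex supported in {1..n}.
Structure constants: c i j k is the coefficient of e_k in e_i e_j.\<close>

definition vecs :: "nat \<Rightarrow> (nat \<Rightarrow> complex) set" where
  "vecs n = {v. \<forall>i. i \<notin> {1..n} \<longrightarrow> v i = 0}"

definition alg_mult :: "nat \<Rightarrow> (nat \<Rightarrow> nat \<Rightarrow> nat \<Rightarrow> complex) \<Rightarrow>
    (nat \<Rightarrow> complex) \<Rightarrow> (nat \<Rightarrow> complex) \<Rightarrow> (nat \<Rightarrow> complex)" where
  "alg_mult n c u v = (\<lambda>k. if k \<in> {1..n}
      then (\<Sum>i\<in>{1..n}. \<Sum>j\<in>{1..n}. u i * v j * c i j k) else 0)"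

text \<open>Linear map given by matrix A: column j is the image of e_j, A i j its e_i-coefficient.\<close>
definition matvec :: "nat \<Rightarrow> (nat \<Rightarrow> nat \<Rightarrow> complex) \<Rightarrow> (nat \<Rightarrow> complex) \<Rightarrow> (nat \<Rightarrow> complex)" where
  "matvec n A v = (\<lambda>i. if i \<in> {1..n} then (\<Sum>j\<in>{1..n}. A i j * v j) else 0)"

definition is_matrix :: "nat \<Rightarrow> (nat \<Rightarrow> nat \<Rightarrow> complex) \<Rightarrow> bool" where
  "is_matrix n A \<longleftrightarrow> (\<forall>i j. i \<notin> {1..n} \<or> j \<notin> {1..n} \<longrightarrow> A i j = 0)"

definition is_automorphism :: "nat \<Rightarrow> (nat \<Rightarrow> nat \<Rightarrow> nat \<Rightarrow> complex) \<Rightarrow> (nat \<Rightarrow> nat \<Rightarrow> complex) \<Rightarrow> bool" where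
  "is_automorphism n c A \<longleftrightarrow> is_matrix n A \<and> bij_betw (matvec n A) (vecs n) (vecs n) \<and>
     (\<forall>u\<in>vecs n. \<forall>v\<in>vecs n. matvec n A (alg_mult n c u v) = alg_mult n c (matvec n A u) (matvec n A v))"

definition in_T' :: "nat \<Rightarrow> (nat \<Rightarrow> nat \<Rightarrow> nat \<Rightarrow> complex) \<Rightarrow> bool" where
  "in_T' n c \<longleftrightarrow>
     (\<forall>i\<in>{1..n}. \<forall>j\<in>{1..n}. \<forall>k\<in>{1..n}. c i j k = - c j i k) \<and>
     (\<forall>i\<in>{1..n}. \<forall>j\<in>{1..n}. \<forall>k\<in>{1..n}. k \<le> max i j \<longrightarrow> c i j k = 0) \<and>
     (\<forall>i. 1 \<le> i \<and> i + 2 \<le> n \<longrightarrow> (\<forall>k\<in>{1..n}. c i (i+1) k = (if k = i + 2 then 1 else 0)))"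

definition mat5 :: "complex list list \<Rightarrow> nat \<Rightarrow> nat \<Rightarrow> complex" where
  "mat5 rows i j = (if i \<in> {1..5} \<and> j \<in> {1..5} then rows ! (i - 1) ! (j - 1) else 0)"

end

theory Submission
  imports Defs
begin

lemma five: "(i::nat) \<in> {1..5} \<Longrightarrow> i = 1 \<or> i = 2 \<or> i = 3 \<or> i = 4 \<or> i = 5"
  by auto

lemma cfacts:
  assumes T: "in_T' 5 c"
  shows "\<And>i j k. i\<in>{1..5} \<Longrightarrow> j\<in>{1..5} \<Longrightarrow> k\<in>{1..5} \<Longrightarrow> j < i \<Longrightarrow> c i j k = - c j i k"
    and "\<And>i j k. i\<in>{1..5} \<Longrightarrow> j\<in>{1..5} \<Longrightarrow> k\<in>{1..5} \<Longrightarrow> k \<le> max i j \<Longrightarrow> c i j k = 0"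
    and "\<And>k. k\<in>{1..5} \<Longrightarrow> c (Suc 0) 2 k = (if k=3 then 1 else 0)"
    and "\<And>i k. i\<in>{1..5} \<Longrightarrow> k\<in>{1..5} \<Longrightarrow> c i i k = 0"
    and "\<And>k. k\<in>{1..5} \<Longrightarrow> c 2 3 k = (if k=4 then 1 else 0)"
    and "\<And>k. k\<in>{1..5} \<Longrightarrow> c 3 4 k = (if k=5 then 1 else 0)"
proof -
  have T1: "\<forall>i\<in>{1..5}. \<forall>j\<in>{1..5}. \<forall>k\<in>{1..5}. c i j k = - c j i k"
    and T2: "\<forall>i\<in>{1..5}. \<forall>j\<in>{1..5}. \<forall>k\<in>{1..5}. k \<le> max i j \<longrightarrow> c i j k = 0"
    and T3: "\<forall>i. 1 \<le> i \<and> i + 2 \<le> (5::nat) \<longrightarrow> (\<forall>k\<in>{1..5}. c i (i+1) k = (if k = i + 2 then 1 else 0))"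
    using T unfolding in_T'_def by (blast, blast, blast)
  have anti: "\<And>i j k. i\<in>{1..5} \<Longrightarrow> j\<in>{1..5} \<Longrightarrow> k\<in>{1..5} \<Longrightarrow> c i j k = - c j i k"
    using T1 by blast
  have low: "\<And>i j k. i\<in>{1..5} \<Longrightarrow> j\<in>{1..5} \<Longrightarrow> k\<in>{1..5} \<Longrightarrow> k \<le> max i j \<Longrightarrow> c i j k = 0"
    using T2 by blast
  have ch: "\<And>i k. 1 \<le> i \<Longrightarrow> i+2 \<le> 5 \<Longrightarrow> k\<in>{1..5} \<Longrightarrow> c i (i+1) k = (if k = i+2 then 1 else 0)"
    using T3 by blast
  show "\<And>i j k. i\<in>{1..5} \<Longrightarrow> j\<in>{1..5} \<Longrightarrow> k\<in>{1..5} \<Longrightarrow> j < i \<Longrightarrow> c i j k = - c j i k"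
    using anti by blast
  show "\<And>i j k. i\<in>{1..5} \<Longrightarrow> j\<in>{1..5} \<Longrightarrow> k\<in>{1..5} \<Longrightarrow> k \<le> max i j \<Longrightarrow> c i j k = 0"
    using low by blast
  show "\<And>k. k\<in>{1..5} \<Longrightarrow> c (Suc 0) 2 k = (if k=3 then 1 else 0)" using ch[of 1] by (simp add: eval_nat_numeral)
  show "\<And>i k. i\<in>{1..5} \<Longrightarrow> k\<in>{1..5} \<Longrightarrow> c i i k = 0"
  proof -
    fix i k :: nat assume "i\<in>{1..5}" "k\<in>{1..5}"
    then have "c i i k = - c i i k" using anti by blast
    then show "c i i k = 0" by simp
  qed
  show "\<And>k. k\<in>{1..5} \<Longrightarrow> c 2 3 k = (if k=4 then 1 else 0)" using ch[of 2] by (simp add: eval_nat_numeral)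
  show "\<And>k. k\<in>{1..5} \<Longrightarrow> c 3 4 k = (if k=5 then 1 else 0)" using ch[of 3] by (simp add: eval_nat_numeral)
qed

definition mulf :: "complex \<Rightarrow> (nat \<Rightarrow> complex) \<Rightarrow> (nat \<Rightarrow> complex) \<Rightarrow> nat \<Rightarrow> complex" where
  "mulf a u v = (\<lambda>k. if k = 3 then u 1 * v 2 - u 2 * v 1
     else if k = 4 then u 2 * v 3 - u 3 * v 2
     else if k = 5 then a * (u 1 * v 3 - u 3 * v 1) + (u 3 * v 4 - u 4 * v 3) else 0)"

lemma set5: "{1..5::nat} = {1,2,3,4,5}" by auto

lemma sum5: "(\<Sum>i\<in>{1..5::nat}. f i) = f 1 + f 2 + f 3 + f 4 + f 5"
  unfolding set5 by (simp add: add.assoc)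

lemma ctab:
  assumes T: "in_T' 5 c" and z: "c 1 3 4 = 0" "c 1 4 5 = 0" "c 2 4 5 = 0"
  shows "c 1 1 1 = 0"
    "c 1 1 2 = 0"
    "c 1 1 3 = 0"
    "c 1 1 4 = 0"
    "c 1 1 5 = 0"
    "c 1 2 1 = 0"
    "c 1 2 2 = 0"
    "c 1 2 3 = 1"
    "c 1 2 4 = 0"
    "c 1 2 5 = 0"
    "c 1 3 1 = 0"
    "c 1 3 2 = 0"
    "c 1 3 3 = 0"
    "c 1 3 4 = 0"
    "c 1 4 1 = 0"
    "c 1 4 2 = 0"
    "c 1 4 3 = 0"
    "c 1 4 4 = 0"
    "c 1 4 5 = 0"
    "c 1 5 1 = 0"
    "c 1 5 2 = 0"
    "c 1 5 3 = 0"
    "c 1 5 4 = 0"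
    "c 1 5 5 = 0"
    "c 2 1 1 = 0"
    "c 2 1 2 = 0"
    "c 2 1 3 = - 1"
    "c 2 1 4 = 0"
    "c 2 1 5 = 0"
    "c 2 2 1 = 0"
    "c 2 2 2 = 0"
    "c 2 2 3 = 0"
    "c 2 2 4 = 0"
    "c 2 2 5 = 0"
    "c 2 3 1 = 0"
    "c 2 3 2 = 0"
    "c 2 3 3 = 0"
    "c 2 3 4 = 1"
    "c 2 3 5 = 0"
    "c 2 4 1 = 0"
    "c 2 4 2 = 0"
    "c 2 4 3 = 0"
    "c 2 4 4 = 0"
    "c 2 4 5 = 0"
    "c 2 5 1 = 0"
    "c 2 5 2 = 0"
    "c 2 5 3 = 0"
    "c 2 5 4 = 0"
    "c 2 5 5 = 0"
    "c 3 1 1 = 0"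
    "c 3 1 2 = 0"
    "c 3 1 3 = 0"
    "c 3 1 4 = 0"
    "c 3 1 5 = - (c 1 3 5)"
    "c 3 2 1 = 0"
    "c 3 2 2 = 0"
    "c 3 2 3 = 0"
    "c 3 2 4 = - 1"
    "c 3 2 5 = 0"
    "c 3 3 1 = 0"
    "c 3 3 2 = 0"
    "c 3 3 3 = 0"
    "c 3 3 4 = 0"
    "c 3 3 5 = 0"
    "c 3 4 1 = 0"
    "c 3 4 2 = 0"
    "c 3 4 3 = 0"
    "c 3 4 4 = 0"
    "c 3 4 5 = 1"
    "c 3 5 1 = 0"
    "c 3 5 2 = 0"
    "c 3 5 3 = 0"
    "c 3 5 4 = 0"
    "c 3 5 5 = 0"
    "c 4 1 1 = 0"
    "c 4 1 2 = 0"
    "c 4 1 3 = 0"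
    "c 4 1 4 = 0"
    "c 4 1 5 = 0"
    "c 4 2 1 = 0"
    "c 4 2 2 = 0"
    "c 4 2 3 = 0"
    "c 4 2 4 = 0"
    "c 4 2 5 = 0"
    "c 4 3 1 = 0"
    "c 4 3 2 = 0"
    "c 4 3 3 = 0"
    "c 4 3 4 = 0"
    "c 4 3 5 = - 1"
    "c 4 4 1 = 0"
    "c 4 4 2 = 0"
    "c 4 4 3 = 0"
    "c 4 4 4 = 0"
    "c 4 4 5 = 0"
    "c 4 5 1 = 0"
    "c 4 5 2 = 0"
    "c 4 5 3 = 0"
    "c 4 5 4 = 0"
    "c 4 5 5 = 0"
    "c 5 1 1 = 0"
    "c 5 1 2 = 0"
    "c 5 1 3 = 0"
    "c 5 1 4 = 0"
    "c 5 1 5 = 0"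
    "c 5 2 1 = 0"
    "c 5 2 2 = 0"
    "c 5 2 3 = 0"
    "c 5 2 4 = 0"
    "c 5 2 5 = 0"
    "c 5 3 1 = 0"
    "c 5 3 2 = 0"
    "c 5 3 3 = 0"
    "c 5 3 4 = 0"
    "c 5 3 5 = 0"
    "c 5 4 1 = 0"
    "c 5 4 2 = 0"
    "c 5 4 3 = 0"
    "c 5 4 4 = 0"
    "c 5 4 5 = 0"
    "c 5 5 1 = 0"
    "c 5 5 2 = 0"
    "c 5 5 3 = 0"
    "c 5 5 4 = 0"
    "c 5 5 5 = 0"
  using cfacts[OF T] z by simp_all

lemma AM:
  assumes T: "in_T' 5 c" and z: "c 1 3 4 = 0" "c 1 4 5 = 0" "c 2 4 5 = 0"
  shows "alg_mult 5 c u v = mulf (c 1 3 5) u v"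
proof
  fix k
  show "alg_mult 5 c u v k = mulf (c 1 3 5) u v k"
  proof (cases "k \<in> {1..5}")
    case True
    show ?thesis
      unfolding alg_mult_def if_P[OF True] sum5
      using five[OF True]
      by (elim disjE; simp only: ctab[OF T z]; simp add: mulf_def algebra_simps)
  next
    case False
    then have "k \<noteq> 3" "k \<noteq> 4" "k \<noteq> 5" by auto
    then show ?thesis unfolding alg_mult_def if_not_P[OF False] by (simp add: mulf_def)
  qed
qed

lemma MV: "matvec 5 A v = (\<lambda>i. if i \<in> {1..5} then A i 1 * v 1 + A i 2 * v 2 + A i 3 * v 3 + A i 4 * v 4 + A i 5 * v 5 else 0)"
  unfolding matvec_def sum5 by simp


theorem mainTheorem15:
  fixes c :: "nat \<Rightarrow> nat \<Rightarrow> nat \<Rightarrow> complex" and A :: "nat \<Rightarrow> nat \<Rightarrow> complex"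
  assumes "in_T' 5 c" and "c 1 3 4 = 0" and "c 1 4 5 = 0" and "c 2 4 5 = 0"
  shows "is_automorphism 5 c A \<longleftrightarrow>
    (\<exists>x y a12 a42 a51 a52. x \<noteq> 0 \<and> y \<noteq> 0 \<and>
      A = mat5 [[x,                     a12, 0,     0,                        0],
                [0,                     y,   0,     0,                        0],
                [0,                     0,   x * y, 0,                        0],
                [c 1 3 5 * x * (1 - y^2), a42, 0,     x * y^2,                  0],
                [a51,                   a52, 0,     x * y * (a12 * c 1 3 5 - a42), x^2 * y^3]])"
proof -
  define a where "a = c 1 3 5"
  have am: "\<And>u v. alg_mult 5 c u v = mulf a u v" unfolding a_def by (rule AM[OF assms])
  have iff: "is_automorphism 5 c A \<longleftrightarrow> is_matrix 5 A \<and> bij_betw (matvec 5 A) (vecs 5) (vecs 5) \<and>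
     (\<forall>u\<in>vecs 5. \<forall>v\<in>vecs 5. matvec 5 A (mulf a u v) = mulf a (matvec 5 A u) (matvec 5 A v))"
    unfolding is_automorphism_def am ..
  show ?thesis unfolding iff a_def[symmetric]
  proof
    assume H: "is_matrix 5 A \<and> bij_betw (matvec 5 A) (vecs 5) (vecs 5) \<and>
     (\<forall>u\<in>vecs 5. \<forall>v\<in>vecs 5. matvec 5 A (mulf a u v) = mulf a (matvec 5 A u) (matvec 5 A v))"
    then have ism: "is_matrix 5 A" and inj: "inj_on (matvec 5 A) (vecs 5)"
      and mult: "\<forall>u\<in>vecs 5. \<forall>v\<in>vecs 5. matvec 5 A (mulf a u v) = mulf a (matvec 5 A u) (matvec 5 A v)"
      by (auto simp: bij_betw_def)
    define e where "e = (\<lambda>j::nat. \<lambda>i::nat. if i = j then (1::complex) else 0)"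
    have ev: "\<And>j. j\<in>{1..5} \<Longrightarrow> e j \<in> vecs 5" by (auto simp: e_def vecs_def)
    have Mk: "\<And>i j k. i\<in>{1..5} \<Longrightarrow> j\<in>{1..5} \<Longrightarrow>
       matvec 5 A (mulf a (e i) (e j)) k = mulf a (matvec 5 A (e i)) (matvec 5 A (e j)) k"
      using mult ev by metis
    note S = MV mulf_def e_def
    have f1: "A 1 3 = 0" "A 2 3 = 0" "A 3 3 = A 1 1 * A 2 2 - A 2 1 * A 1 2"
      "A 4 3 = A 2 1 * A 3 2 - A 3 1 * A 2 2"
      "A 5 3 = a*(A 1 1 * A 3 2 - A 3 1 * A 1 2) + (A 3 1 * A 4 2 - A 4 1 * A 3 2)"
      using Mk[of 1 2 1] Mk[of 1 2 2] Mk[of 1 2 3] Mk[of 1 2 4] Mk[of 1 2 5] by (simp_all add: S)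
    have f2: "A 1 4 = 0" "A 2 4 = 0" "A 3 4 = A 1 2 * A 2 3 - A 2 2 * A 1 3"
      "A 4 4 = A 2 2 * A 3 3 - A 3 2 * A 2 3"
      "A 5 4 = a*(A 1 2 * A 3 3 - A 3 2 * A 1 3) + (A 3 2 * A 4 3 - A 4 2 * A 3 3)"
      using Mk[of 2 3 1] Mk[of 2 3 2] Mk[of 2 3 3] Mk[of 2 3 4] Mk[of 2 3 5] by (simp_all add: S)
    have f3: "A 1 5 = 0" "A 2 5 = 0" "A 3 5 = A 1 3 * A 2 4 - A 2 3 * A 1 4"
      "A 4 5 = A 2 3 * A 3 4 - A 3 3 * A 2 4"
      "A 5 5 = a*(A 1 3 * A 3 4 - A 3 3 * A 1 4) + (A 3 3 * A 4 4 - A 4 3 * A 3 4)"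
      using Mk[of 3 4 1] Mk[of 3 4 2] Mk[of 3 4 3] Mk[of 3 4 4] Mk[of 3 4 5] by (simp_all add: S)
    have f4: "A 4 5 * a = A 2 1 * A 3 3 - A 3 1 * A 2 3"
      "A 5 5 * a = a*(A 1 1 * A 3 3 - A 3 1 * A 1 3) + (A 3 1 * A 4 3 - A 4 1 * A 3 3)"
      "0 = a*(A 1 1 * A 3 4 - A 3 1 * A 1 4) + (A 3 1 * A 4 4 - A 4 1 * A 3 4)"
      "0 = a*(A 1 2 * A 3 4 - A 3 2 * A 1 4) + (A 3 2 * A 4 4 - A 4 2 * A 3 4)"
      using Mk[of 1 3 4] Mk[of 1 3 5] Mk[of 1 4 5] Mk[of 2 4 5] by (simp_all add: S)
    have g1: "A 3 4 = 0" "A 3 5 = 0" "A 4 5 = 0" using f1 f2 f3 by simp_all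
    have g2: "A 5 5 = A 3 3 * A 4 4" using f3 f1 f2 g1 by simp
    have A55: "A 5 5 \<noteq> 0"
    proof
      assume z: "A 5 5 = 0"
      have c5: "A i 5 = 0" for i
      proof (cases "i \<in> {1..5}")
        case True then show ?thesis using five[OF True] f1 f2 f3 g1 z by auto
      next
        case False then show ?thesis using ism by (simp add: is_matrix_def)
      qed
      have "matvec 5 A (e 5) = matvec 5 A (\<lambda>_. 0)"
        by (rule ext) (simp add: MV e_def c5)
      then have "e 5 = (\<lambda>_. 0)"
        using inj ev[of 5] by (auto simp: inj_on_def vecs_def)
      then show False by (metis e_def zero_neq_one)
    qed
    have n33: "A 3 3 \<noteq> 0" and n44: "A 4 4 \<noteq> 0" using A55 g2 by auto
    have g3: "A 3 1 = 0" "A 3 2 = 0" using f4 g1 f2 f1 n44 by simp_all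
    have g4: "A 2 1 = 0" using f4(1) g1 g3 f1 n33 by simp
    have g5: "A 4 3 = 0" "A 5 3 = 0" "A 3 3 = A 1 1 * A 2 2" using f1 g3 g4 by simp_all
    have g6: "A 4 4 = A 2 2 * A 3 3" using f2 g3 f1 by simp
    have g7: "A 5 4 = A 1 1 * A 2 2 * (A 1 2 * a - A 4 2)" using f2 g3 g4 f1 g5 by (simp add: algebra_simps)
    have n11: "A 1 1 \<noteq> 0" and n22: "A 2 2 \<noteq> 0" using n33 g5 by auto
    have "A 3 3 * A 4 1 = A 3 3 * (a * A 1 1 * (1 - (A 2 2)^2))"
      using f4(2) g2 g3 g4 g5 g6 f1 by (simp add: algebra_simps power2_eq_square)
    then have g8: "A 4 1 = a * A 1 1 * (1 - (A 2 2)^2)" using n33 by simp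
    have g9: "A 5 5 = (A 1 1)^2 * (A 2 2)^3" using g2 g6 g5 by (simp add: algebra_simps power2_eq_square power3_eq_cube)
    have rest: "A 1 3 = 0" "A 2 3 = 0" "A 1 4 = 0" "A 2 4 = 0" "A 1 5 = 0" "A 2 5 = 0" using f1 f2 f3 by simp_all
    show "\<exists>x y a12 a42 a51 a52. x \<noteq> 0 \<and> y \<noteq> 0 \<and>
      A = mat5 [[x,                     a12, 0,     0,                        0],
                [0,                     y,   0,     0,                        0],
                [0,                     0,   x * y, 0,                        0],
                [a * x * (1 - y^2), a42, 0,     x * y^2,                  0],
                [a51,                   a52, 0,     x * y * (a12 * a - a42), x^2 * y^3]]"
    proof (intro exI conjI)
      show "A 1 1 \<noteq> 0" "A 2 2 \<noteq> 0" by fact+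
      show "A = mat5 [[A 1 1, A 1 2, 0,     0,                        0],
                [0,                     A 2 2,   0,     0,                        0],
                [0,                     0,   A 1 1 * A 2 2, 0,                        0],
                [a * A 1 1 * (1 - (A 2 2)^2), A 4 2, 0,     A 1 1 * (A 2 2)^2,                  0],
                [A 5 1,                   A 5 2, 0,     A 1 1 * A 2 2 * (A 1 2 * a - A 4 2), (A 1 1)^2 * (A 2 2)^3]]"
      proof (intro ext)
        fix i j :: nat
        show "A i j = mat5 [[A 1 1, A 1 2, 0,     0,                        0],
                [0,                     A 2 2,   0,     0,                        0],
                [0,                     0,   A 1 1 * A 2 2, 0,                        0],
                [a * A 1 1 * (1 - (A 2 2)^2), A 4 2, 0,     A 1 1 * (A 2 2)^2,                  0],
                [A 5 1,                   A 5 2, 0,     A 1 1 * A 2 2 * (A 1 2 * a - A 4 2), (A 1 1)^2 * (A 2 2)^3]] i j"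
        proof (cases "i \<in> {1..5} \<and> j \<in> {1..5}")
          case True
          note F = g1 g3 g4 g5 g7 g8 g9 rest g6
          show ?thesis using five[of i] five[of j] True
            by (auto simp: mat5_def F F[unfolded One_nat_def] power2_eq_square)
        next
          case False
          then show ?thesis using ism by (auto simp: is_matrix_def mat5_def)
        qed
      qed
    qed
  next
    assume "\<exists>x y a12 a42 a51 a52. x \<noteq> 0 \<and> y \<noteq> 0 \<and>
      A = mat5 [[x,                     a12, 0,     0,                        0],
                [0,                     y,   0,     0,                        0],
                [0,                     0,   x * y, 0,                        0],
                [a * x * (1 - y^2), a42, 0,     x * y^2,                  0],
                [a51,                   a52, 0,     x * y * (a12 * a - a42), x^2 * y^3]]"
    then obtain x y a12 a42 a51 a52 where nx: "x \<noteq> 0" and ny: "y \<noteq> 0" and AA: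
      "A = mat5 [[x,                     a12, 0,     0,                        0],
                [0,                     y,   0,     0,                        0],
                [0,                     0,   x * y, 0,                        0],
                [a * x * (1 - y^2), a42, 0,     x * y^2,                  0],
                [a51,                   a52, 0,     x * y * (a12 * a - a42), x^2 * y^3]]"
      by blast
    have ism: "is_matrix 5 A" unfolding AA by (simp add: is_matrix_def mat5_def)
    have Av: "\<And>v. matvec 5 A v = (\<lambda>i. if i = 1 then x * v 1 + a12 * v 2 else if i = 2 then y * v 2
        else if i = 3 then x * y * v 3 else if i = 4 then a * x * (1 - y^2) * v 1 + a42 * v 2 + x * y^2 * v 4
        else if i = 5 then a51 * v 1 + a52 * v 2 + x * y * (a12 * a - a42) * v 4 + x^2 * y^3 * v 5 else 0)"
      unfolding MV AA by (rule ext) (simp add: mat5_def)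
    have mult: "\<forall>u\<in>vecs 5. \<forall>v\<in>vecs 5. matvec 5 A (mulf a u v) = mulf a (matvec 5 A u) (matvec 5 A v)"
      unfolding Av by (auto simp: mulf_def algebra_simps power2_eq_square power3_eq_cube)
    have inj: "inj_on (matvec 5 A) (vecs 5)"
    proof (rule inj_onI)
      fix u v assume u: "u \<in> vecs 5" and v: "v \<in> vecs 5" and e: "matvec 5 A u = matvec 5 A v"
      have e1: "x * u 1 + a12 * u 2 = x * v 1 + a12 * v 2" using fun_cong[OF e, of 1] by (simp add: Av)
      have e2: "y * u 2 = y * v 2" using fun_cong[OF e, of 2] by (simp add: Av)
      have e3: "x * y * u 3 = x * y * v 3" using fun_cong[OF e, of 3] by (simp add: Av)
      have e4: "a * x * (1 - y^2) * u 1 + a42 * u 2 + x * y^2 * u 4 = a * x * (1 - y^2) * v 1 + a42 * v 2 + x * y^2 * v 4"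
        using fun_cong[OF e, of 4] by (simp add: Av)
      have e5: "a51 * u 1 + a52 * u 2 + x * y * (a12 * a - a42) * u 4 + x^2 * y^3 * u 5 = a51 * v 1 + a52 * v 2 + x * y * (a12 * a - a42) * v 4 + x^2 * y^3 * v 5"
        using fun_cong[OF e, of 5] by (simp add: Av)
      have q2: "u 2 = v 2" using e2 ny by simp
      have q1: "u 1 = v 1" using e1 q2 nx by simp
      have q3: "u 3 = v 3" using e3 nx ny by simp
      have q4: "u 4 = v 4" using e4 q1 q2 nx ny by simp
      have q5: "u 5 = v 5" using e5 q1 q2 q4 nx ny by simp
      show "u = v"
      proof
        fix i show "u i = v i"
        proof (cases "i \<in> {1..5}")
          case True then show ?thesis using five[OF True] q1 q2 q3 q4 q5 by auto
        next
          case False then show ?thesis using u v by (simp add: vecs_def)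
        qed
      qed
    qed
    have img: "matvec 5 A ` vecs 5 = vecs 5"
    proof
      show "matvec 5 A ` vecs 5 \<subseteq> vecs 5" by (auto simp: vecs_def matvec_def)
      show "vecs 5 \<subseteq> matvec 5 A ` vecs 5"
      proof
        fix w assume w: "w \<in> vecs 5"
        define v2 where "v2 = w 2 / y"
        define v1 where "v1 = (w 1 - a12 * v2) / x"
        define v3 where "v3 = w 3 / (x * y)"
        define v4 where "v4 = (w 4 - a * x * (1 - y^2) * v1 - a42 * v2) / (x * y^2)"
        define v5 where "v5 = (w 5 - a51 * v1 - a52 * v2 - x * y * (a12 * a - a42) * v4) / (x^2 * y^3)"
        define v where "v = (\<lambda>i::nat. if i = 1 then v1 else if i = 2 then v2 else if i = 3 then v3
           else if i = 4 then v4 else if i = 5 then v5 else 0)"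
        have vv: "v \<in> vecs 5" by (auto simp: v_def vecs_def)
        have "matvec 5 A v = w"
        proof
          fix i
          show "matvec 5 A v i = w i"
          proof (cases "i \<in> {1..5}")
            case True then show ?thesis using five[OF True] nx ny
              by (auto simp: Av v_def v1_def v2_def v3_def v4_def v5_def field_simps)
          next
            case False then show ?thesis using w by (auto simp: Av vecs_def)
          qed
        qed
        then show "w \<in> matvec 5 A ` vecs 5" using vv by blast
      qed
    qed
    show "is_matrix 5 A \<and> bij_betw (matvec 5 A) (vecs 5) (vecs 5) \<and>
     (\<forall>u\<in>vecs 5. \<forall>v\<in>vecs 5. matvec 5 A (mulf a u v) = mulf a (matvec 5 A u) (matvec 5 A v))"
      using ism inj img mult by (simp add: bij_betw_def)
  qed
qed

end
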